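(* Let $n$ be a positive integer and $\mu>2$. Then for every polynomial $p\in\mathbb{P}^2_n$, $$\|p\|_Q\le\frac{1}{\cos\frac{\pi}{\mu}}\min\{\|p\|_{\mathcal A_{\lceil\mu n\rceil}},\ \|p\|_{\mathcal B_{\lceil\mu n\rceil}},\ \|p\|_{MP_{\lceil 2\mu n\rceil}}\},$$ i.e. $\mathcal A_{\lceil\mu n\rceil}$, $\mathcal B_{\lceil\mu n\rceil}$, $MP_{\lceil 2\mu n\rceil}$ are optimal admissible meshes for $\mathbb{P}^2_n$ in $Q$. Moreover, for any set $S\subset Q$ of $\frac{(n+1)(n+2)}{2}$ points which is unisolvent for $\mathbb{P}^2_n$, $$\Lambda_n^S\le\frac{1}{\cos\frac{\pi}{\mu}}\min\{\|\lambda_n^S\|_{\mathcal A_{\lceil\mu n\rceil}},\ \|\lambda_n^S\|_{\mathcal B_{\lceil\mu n\rceil}},\ \|\lambda_n^S\|_{MP_{\lceil 2\mu n\rceil}}\}.$$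
   Context: $Q=[-1,1]^2$, $\mathbb{P}^2_n$ is the space of real bivariate polynomials of total degree at most $n$, and for a set $T\subset Q$ and a function $g$, $\|g\|_T=\sup_{T}|g|$. For a positive integer $\nu$, the Morrow-Patterson set is $MP_\nu=\{(\cos\frac{m\pi}{\nu+2},\cos\frac{j\pi}{\nu+3}) : 1\le m\le\nu+1,\ 1\le j\le\nu+2,\ m+j \text{ odd}\}$ (it has $\frac{(\nu+1)(\nu+2)}{2}$ points). Define $\mathcal A_\nu=MP_\nu\cup\{(1,1),(-1,1)\}$ if $\nu$ is even and $\mathcal A_\nu=MP_\nu\cup\{(1,1),(1,-1)\}$ if $\nu$ is odd; $\mathcal B_\nu=MP_\nu\cup\{(\cos\frac{\pi}{\nu+2},\cos\frac{\pi}{\nu+3}),(\cos\frac{(\nu+1)\pi}{\nu+2},\cos\frac{\pi}{\nu+3})\}$ if $\nu$ is even and $\mathcal B_\nu=MP_\nu\cup\{(\cos\frac{\pi}{\nu+2},\cos\frac{\pi}{\nu+3}),(\cos\frac{\pi}{\nu+2},\cos\frac{(\nu+2)\pi}{\nu+3})\}$ if $\nu$ is odd. For a unisolvent set $S$, $\lambda_n^S=\sum_{s\in S}|\ell_s|$ with $\ell_s\in\mathbb{P}^2_n$ the Lagrange basis polynomials ($\ell_s(t)=\delta_{st}$ for $s,t\in S$), and $\Lambda_n^S=\|\lambda_n^S\|_Q$ is the Lebesgue constant. $\lceil x\rceil$ denotes the ceiling. *)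

theory Defs
  imports Complex_Main
begin

definition Qsq :: "(real \<times> real) set" where
  "Qsq = {-1..1} \<times> {-1..1}"

definition bipoly :: "nat \<Rightarrow> (real \<times> real \<Rightarrow> real) \<Rightarrow> bool" where
  "bipoly n f \<longleftrightarrow> (\<exists>c :: nat \<Rightarrow> nat \<Rightarrow> real.
     \<forall>x y. f (x, y) = (\<Sum>i\<le>n. \<Sum>j\<le>n - i. c i j * x ^ i * y ^ j))"

definition supnorm :: "(real \<times> real) set \<Rightarrow> (real \<times> real \<Rightarrow> real) \<Rightarrow> real" where
  "supnorm T g = (SUP t\<in>T. \<bar>g t\<bar>)"

definition MP :: "nat \<Rightarrow> (real \<times> real) set" where
  "MP \<nu> = {(cos (real m * pi / real (\<nu> + 2)), cos (real j * pi / real (\<nu> + 3))) | m j.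
             1 \<le> m \<and> m \<le> \<nu> + 1 \<and> 1 \<le> j \<and> j \<le> \<nu> + 2 \<and> odd (m + j)}"

definition setA :: "nat \<Rightarrow> (real \<times> real) set" where
  "setA \<nu> = (if even \<nu> then MP \<nu> \<union> {(1, 1), (-1, 1)} else MP \<nu> \<union> {(1, 1), (1, -1)})"

definition setB :: "nat \<Rightarrow> (real \<times> real) set" where
  "setB \<nu> = (if even \<nu> then
      MP \<nu> \<union> {(cos (pi / real (\<nu> + 2)), cos (pi / real (\<nu> + 3))),
               (cos (real (\<nu> + 1) * pi / real (\<nu> + 2)), cos (pi / real (\<nu> + 3)))}
    else
      MP \<nu> \<union> {(cos (pi / real (\<nu> + 2)), cos (pi / real (\<nu> + 3))),
               (cos (pi / real (\<nu> + 2)), cos (real (\<nu> + 2) * pi / real (\<nu> + 3)))})"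

definition unisolvent :: "nat \<Rightarrow> (real \<times> real) set \<Rightarrow> bool" where
  "unisolvent n S \<longleftrightarrow> (\<forall>d :: real \<times> real \<Rightarrow> real.
      \<exists>!p. bipoly n p \<and> (\<forall>s\<in>S. p s = d s))"

definition lagrange :: "nat \<Rightarrow> (real \<times> real) set \<Rightarrow> real \<times> real \<Rightarrow> (real \<times> real \<Rightarrow> real)" where
  "lagrange n S s = (THE p. bipoly n p \<and> (\<forall>t\<in>S. p t = (if t = s then 1 else 0)))"

definition lebfun :: "nat \<Rightarrow> (real \<times> real) set \<Rightarrow> real \<times> real \<Rightarrow> real" where
  "lebfun n S x = (\<Sum>s\<in>S. \<bar>lagrange n S s x\<bar>)"

end

theory Submission
  imports Defs "HOL-Analysis.Analysis" "HOL-Computational_Algebra.Polynomial"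
begin

definition tp :: "nat \<Rightarrow> (real \<Rightarrow> real) \<Rightarrow> bool" where
  "tp N f \<longleftrightarrow> (\<exists>P::complex poly. degree P \<le> 2*N \<and>
      (\<forall>t. complex_of_real (f t) = cis (-(real N * t)) * poly P (cis t)))"

lemma tp_add: "tp N f \<Longrightarrow> tp N g \<Longrightarrow> tp N (\<lambda>t. f t + g t)"
  unfolding tp_def
  apply (elim exE conjE)
  subgoal for P Q
    apply (rule exI[of _ "P + Q"])
    by (auto simp: degree_add_le distrib_left)
  done

lemma tp_scale: "tp N f \<Longrightarrow> tp N (\<lambda>t. c * f t)"
  unfolding tp_def
  apply (elim exE conjE)
  subgoal for P
    apply (rule exI[of _ "smult (complex_of_real c) P"])
    by auto
  done

lemma tp_mono: assumes "tp N f" "N \<le> N'" shows "tp N' f"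
proof -
  from assms obtain P where P: "degree P \<le> 2*N" "\<And>t. complex_of_real (f t) = cis (-(real N * t)) * poly P (cis t)"
    unfolding tp_def by blast
  show ?thesis unfolding tp_def
  proof (intro exI conjI allI)
    show "degree (monom 1 (N'-N) * P) \<le> 2 * N'"
      using P(1) assms(2) degree_mult_le[of "monom (1::complex) (N'-N)" P] by (simp add: degree_monom_eq)
    fix t
    have "cis (-(real N' * t)) * poly (monom 1 (N'-N) * P) (cis t) =
        cis (-(real N' * t)) * cis t ^ (N' - N) * poly P (cis t)"
      by (simp add: poly_monom)
    also have "cis t ^ (N' - N) = cis (real (N'-N) * t)" by (rule Complex.DeMoivre)
    also have "cis (-(real N' * t)) * cis (real (N'-N) * t) = cis (-(real N * t))"
      using assms(2) by (simp add: cis_mult of_nat_diff algebra_simps)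
    finally have e: "cis (-(real N' * t)) * poly (monom 1 (N'-N) * P) (cis t) = cis (-(real N * t)) * poly P (cis t)" .
    show "complex_of_real (f t) = cis (-(real N' * t)) * poly (monom 1 (N'-N) * P) (cis t)"
      by (rule trans[OF P(2) e[symmetric]])
  qed
qed

lemma tp_mult: assumes "tp N f" "tp M g" shows "tp (N+M) (\<lambda>t. f t * g t)"
proof -
  from assms obtain P Q where P: "degree P \<le> 2*N" "\<And>t. complex_of_real (f t) = cis (-(real N * t)) * poly P (cis t)"
   and Q: "degree Q \<le> 2*M" "\<And>t. complex_of_real (g t) = cis (-(real M * t)) * poly Q (cis t)"
    unfolding tp_def by blast
  show ?thesis unfolding tp_def
  proof (intro exI conjI allI)
    show "degree (P * Q) \<le> 2 * (N+M)"
      using P(1) Q(1) degree_mult_le[of P Q] by simp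
    fix t
    show "complex_of_real (f t * g t) = cis (-(real (N+M) * t)) * poly (P*Q) (cis t)"
      using P(2)[of t] Q(2)[of t] by (simp add: cis_mult algebra_simps)
  qed
qed

lemma tp_const: "tp N (\<lambda>t. c)"
  unfolding tp_def
proof (intro exI conjI allI)
  show "degree (monom (complex_of_real c) N) \<le> 2*N"
    by (rule order.trans[OF degree_monom_le]) simp
  fix t
  have "cis (-(real N * t)) * cis t ^ N = 1"
    by (simp add: Complex.DeMoivre cis_mult)
  then show "complex_of_real c = cis (-(real N * t)) * poly (monom (complex_of_real c) N) (cis t)"
    by (simp add: poly_monom mult.left_commute)
qed

lemma tp_cos: "tp k (\<lambda>t. cos (real k * t + c))"
  unfolding tp_def
proof (intro exI conjI allI)
  let ?P = "monom (cis c / 2) (2*k) + [:cis (-c) / 2:]"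
  show "degree ?P \<le> 2 * k"
    by (metis degree_add_le degree_monom_le degree_pCons_0 le0)
  fix t
  have "cis (-(real k * t)) * poly ?P (cis t) = cis (-(real k * t)) * (cis c / 2 * cis (real (2*k) * t) + cis (-c)/2)"
    using Complex.DeMoivre[of t "2*k"] by (simp add: poly_monom)
  also have "\<dots> = (cis (real k * t + c) + cis (-(real k * t + c))) / 2"
    by (simp add: cis_mult field_simps)
  also have "\<dots> = complex_of_real (cos (real k * t + c))"
    using cos_minus[of "real k * t + c"] sin_minus[of "real k * t + c"] by (simp add: complex_eq_iff)
  finally show "complex_of_real (cos (real k * t + c)) = cis (-(real k * t)) * poly ?P (cis t)" by simp
qed

lemma tp_vderiv:
  assumes "\<forall>t. complex_of_real (E t) = cis (-(real N * t)) * poly P (cis t)"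
  shows "((\<lambda>t. complex_of_real (E t)) has_vector_derivative
           (\<i> * (poly (pderiv P) 1 - of_nat N * poly P 1))) (at 0)"
proof -
  have d1: "((\<lambda>z. exp (-(\<i> * of_nat N * z))) has_field_derivative -(\<i> * of_nat N)) (at 0)"
    by (auto intro!: derivative_eq_intros)
  have d2: "((\<lambda>z. exp (\<i> * z)) has_field_derivative \<i>) (at 0)"
    by (auto intro!: derivative_eq_intros)
  have d3: "((\<lambda>z. poly P (exp (\<i> * z))) has_field_derivative poly (pderiv P) 1 * \<i>) (at 0)"
    using DERIV_chain2[OF poly_DERIV d2] by simp
  have d4: "((\<lambda>z. exp (-(\<i> * of_nat N * z)) * poly P (exp (\<i> * z))) has_field_derivative
        (\<i> * (poly (pderiv P) 1 - of_nat N * poly P 1))) (at (of_real 0))"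
    using DERIV_mult[OF d1 d3] by (simp add: algebra_simps)
  have e: "(\<lambda>t. complex_of_real (E t)) = (\<lambda>t. exp (-(\<i> * of_nat N * of_real t)) * poly P (exp (\<i> * of_real t)))"
  proof
    fix t
    have "exp (-(\<i> * of_nat N * of_real t)) = cis (-(real N * t))"
      by (simp add: cis_conv_exp mult.assoc)
    moreover have "exp (\<i> * of_real t) = cis t" by (simp add: cis_conv_exp)
    ultimately show "complex_of_real (E t) = exp (-(\<i> * of_nat N * of_real t)) * poly P (exp (\<i> * of_real t))"
      using assms by simp
  qed
  show ?thesis unfolding e
    by (rule has_vector_derivative_real_field[OF d4])
qed

lemma tp_deriv_exists: assumes "tp N f" shows "\<exists>D. (f has_real_derivative D) (at 0)"
proof -
  from assms obtain P where P: "\<forall>t. complex_of_real (f t) = cis (-(real N * t)) * poly P (cis t)"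
    unfolding tp_def by blast
  from tp_vderiv[OF P] have "((\<lambda>t. Re (complex_of_real (f t))) has_vector_derivative
           Re (\<i> * (poly (pderiv P) 1 - of_nat N * poly P 1))) (at 0)"
    by (rule bounded_linear.has_vector_derivative[OF bounded_linear_Re])
  then show ?thesis
    by (auto simp: has_real_derivative_iff_has_vector_derivative)
qed

lemma cis_angles_inj:
  assumes "N > 0" "m < 2*N" "l < 2*N" "cis (real m * pi / real N) = cis (real l * pi / real N)"
  shows "m = l"
proof -
  from assms(4) have "sin (real m * pi / real N) = sin (real l * pi / real N) \<and>
      cos (real m * pi / real N) = cos (real l * pi / real N)"
    by (metis cis.sel(1) cis.sel(2))
  then obtain n :: int where n: "real m * pi / real N = real l * pi / real N + 2 * pi * n"
    using sin_cos_eq_iff by blast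
  then have "pi * real m = pi * (real l + 2 * real N * n)"
    using assms(1) by (simp add: field_simps)
  then have "real m = real l + 2 * real N * n"
    using pi_neq_zero mult_left_cancel by blast
  then have "int m = int l + 2 * int N * n"
    by (metis (mono_tags, opaque_lifting) of_int_eq_iff of_int_add of_int_mult of_int_numeral of_int_of_nat_eq)
  moreover have "n = 0"
  proof (rule ccontr)
    assume "n \<noteq> 0"
    then have "\<bar>2 * int N * n\<bar> \<ge> 2 * int N"
      by (simp add: abs_mult mult_le_cancel_left1 int_one_le_iff_zero_less)
    moreover have "\<bar>int m - int l\<bar> < 2 * int N" using assms(2,3) by linarith
    ultimately show False using \<open>int m = int l + 2 * int N * n\<close> by linarith
  qed
  ultimately show "m = l" by simp
qed

lemma tp_unique0:
  assumes N: "N > 0" and tpE: "tp N E" and z: "\<forall>m<2*N. E (real m * pi / real N) = 0"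
    and d: "(E has_real_derivative 0) (at 0)"
  shows "E t = 0"
proof -
  obtain P where deg: "degree P \<le> 2*N" and P: "\<forall>t. complex_of_real (E t) = cis (-(real N * t)) * poly P (cis t)"
    using tpE unfolding tp_def by blast
  have root: "poly P (cis (real m * pi / real N)) = 0" if "m < 2*N" for m
  proof -
    have "complex_of_real (E (real m * pi / real N)) = 0" using z that by simp
    then show ?thesis using P by (simp add: cis_neq_zero)
  qed
  have P1: "poly P 1 = 0" using root[of 0] N by simp
  have "\<i> * (poly (pderiv P) 1 - of_nat N * poly P 1) = of_real 0"
    using vector_derivative_unique_at[OF tp_vderiv[OF P] has_vector_derivative_of_real[OF d]] .
  then have dP1: "poly (pderiv P) 1 = 0" using P1 by simp
  show ?thesis
  proof (cases "P = 0")
    case True then show ?thesis using P by simp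
  next
    case False
    from P1 obtain Q where Q: "P = [:-1,1:] * Q"
      using poly_eq_0_iff_dvd[of P 1] by (auto elim: dvdE)
    have "poly (pderiv P) 1 = poly Q 1"
      unfolding Q pderiv_mult by (simp add: pderiv_pCons)
    then have "poly Q 1 = 0" using dP1 by simp
    then obtain R where R: "Q = [:-1,1:] * R"
      using poly_eq_0_iff_dvd[of Q 1] by (auto elim: dvdE)
    have R0: "R \<noteq> 0" using False Q R by auto
    have d1: "degree ([:-1,1:] * R) = degree R + 1"
      by (subst degree_mult_eq) (use R0 in auto)
    have "[:-1,1:] * R \<noteq> 0" using R0 by (simp only: mult_eq_0_iff) simp
    then have degR: "degree P = degree R + 2"
      unfolding Q R by (subst degree_mult_eq) (use d1 in auto)
    have rootR: "poly R (cis (real m * pi / real N)) = 0" if "1 \<le> m" "m < 2*N" for m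
    proof -
      have ne: "cis (real m * pi / real N) \<noteq> 1"
      proof
        assume "cis (real m * pi / real N) = 1"
        then have "cis (real m * pi / real N) = cis (real 0 * pi / real N)" by simp
        from cis_angles_inj[OF N that(2) _ this] N show False using that(1) by simp
      qed
      have "poly P (cis (real m * pi / real N)) = (cis (real m * pi / real N) - 1)^2 * poly R (cis (real m * pi / real N))"
        unfolding Q R by (simp add: power2_eq_square algebra_simps)
      with root[OF that(2)] ne show ?thesis by simp
    qed
    have sub: "(\<lambda>m. cis (real m * pi / real N)) ` {1..<2*N} \<subseteq> {x. poly R x = 0}"
      using rootR by auto
    have inj: "inj_on (\<lambda>m. cis (real m * pi / real N)) {1..<2*N}"
      by (rule inj_onI) (use cis_angles_inj[OF N] in auto)
    have "2*N - 1 = card ((\<lambda>m. cis (real m * pi / real N)) ` {1..<2*N})"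
      using card_image[OF inj] by simp
    also have "\<dots> \<le> card {x. poly R x = 0}"
      by (rule card_mono[OF poly_roots_finite[OF R0] sub])
    also have "\<dots> \<le> degree R" by (rule card_poly_roots_bound[OF R0])
    finally show ?thesis using degR deg N by linarith
  qed
qed

lemma tp_sin: "tp k (\<lambda>t. sin (real k * t + c))"
proof -
  have "(\<lambda>t. sin (real k * t + c)) = (\<lambda>t. cos (real k * t + (c - pi/2)))"
    by (rule ext) (simp add: cos_add sin_add cos_diff sin_diff)
  then show ?thesis using tp_cos[of k "c - pi/2"] by simp
qed

lemma tp_diff: "tp N f \<Longrightarrow> tp N g \<Longrightarrow> tp N (\<lambda>t. f t - g t)"
  using tp_add[of N f "\<lambda>t. (-1) * g t"] tp_scale[of N g "-1"] by simp

lemma tp_sum: "finite A \<Longrightarrow> (\<And>i. i \<in> A \<Longrightarrow> tp N (f i)) \<Longrightarrow> tp N (\<lambda>t. \<Sum>i\<in>A. f i t)"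
proof (induction A rule: finite_induct)
  case empty
  then show ?case using tp_const[of N 0] by simp
next
  case (insert x F)
  then show ?case using tp_add[of N "f x" "\<lambda>t. \<Sum>i\<in>F. f i t"] by simp
qed

lemma tele: "2 * sin (s/2) * (\<Sum>j<N. cos ((real j + 1/2) * s)) = sin (real N * s)"
proof (induction N)
  case 0 then show ?case by simp
next
  case (Suc N)
  have "2 * sin (s/2) * cos ((real N + 1/2) * s) = sin (s/2 + (real N + 1/2) * s) + sin (s/2 - (real N + 1/2) * s)"
    using sin_times_cos[of "s / 2" "(real N + 1 / 2) * s"] by simp
  also have "s/2 + (real N + 1/2) * s = real (Suc N) * s" by (simp add: algebra_simps)
  also have "s/2 - (real N + 1/2) * s = - (real N * s)" by (simp add: algebra_simps)
  finally have "2 * sin (s/2) * cos ((real N + 1/2) * s) = sin (real (Suc N) * s) - sin (real N * s)" by simp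
  then show ?case using Suc by (simp add: algebra_simps)
qed

definition Lk :: "nat \<Rightarrow> nat \<Rightarrow> real \<Rightarrow> real" where
  "Lk N k t = sin (t/2) * (\<Sum>j<N. cos ((real j + 1/2) * (t - real k * pi / real N)))"

lemma tp_Lk: "tp N (Lk N k)"
proof -
  define c where "c j = (real j + 1/2) * (real k * pi / real N)" for j
  have e: "Lk N k t = (\<Sum>j<N. (1/2) * sin (real (Suc j) * t + (- c j)) - (1/2) * sin (real j * t + (- c j)))" for t
  proof -
    have "sin (t/2) * cos ((real j + 1/2) * (t - real k * pi / real N)) =
      (1/2) * sin (real (Suc j) * t + (- c j)) - (1/2) * sin (real j * t + (- c j))" for j
    proof -
      have "sin (t/2) * cos ((real j + 1/2) * (t - real k * pi / real N)) =
        (sin (t/2 + (real j + 1/2) * (t - real k * pi / real N)) + sin (t/2 - (real j + 1/2) * (t - real k * pi / real N)))/2"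
        by (rule sin_times_cos)
      also have "t/2 + (real j + 1/2) * (t - real k * pi / real N) = real (Suc j) * t + (- c j)"
        by (simp add: c_def algebra_simps)
      also have "t/2 - (real j + 1/2) * (t - real k * pi / real N) = - (real j * t + (- c j))"
        by (simp add: c_def algebra_simps)
      also have "sin (-(real j * t + (- c j))) = - sin (real j * t + (- c j))" by (rule sin_minus)
      finally show ?thesis by (simp add: field_simps)
    qed
    then show ?thesis unfolding Lk_def sum_distrib_left by simp
  qed
  have "tp N (\<lambda>t. \<Sum>j<N. (1/2) * sin (real (Suc j) * t + (- c j)) - (1/2) * sin (real j * t + (- c j)))"
    (is "tp N ?g")
  proof (rule tp_sum)
    fix j assume "j \<in> {..<N}"
    then have j: "Suc j \<le> N" "j \<le> N" by auto
    show "tp N (\<lambda>t. (1/2) * sin (real (Suc j) * t + (- c j)) - (1/2) * sin (real j * t + (- c j)))"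
      by (intro tp_diff tp_scale tp_mono[OF tp_sin] j)
  qed simp
  moreover have "Lk N k = ?g" by (rule ext, rule e)
  ultimately show ?thesis by simp
qed

lemma Lk_rel:
  assumes "N > 0"
  shows "sin ((t - real k * pi / real N)/2) * Lk N k t = sin (t/2) * (-1)^k * sin (real N * t) / 2"
proof -
  let ?s = "t - real k * pi / real N"
  have "2 * sin (?s/2) * (\<Sum>j<N. cos ((real j + 1/2) * ?s)) = sin (real N * ?s)" by (rule tele)
  also have "real N * ?s = real N * t - real k * pi" using assms by (simp add: field_simps)
  also have "sin (real N * t - real k * pi) = (-1)^k * sin (real N * t)"
    by (simp add: sin_diff)
  finally show ?thesis unfolding Lk_def by (simp add: algebra_simps)
qed

lemma sin_pos_half: "0 < y \<Longrightarrow> y < 2*pi \<Longrightarrow> sin (y/2) > 0"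
  by (rule sin_gt_zero) auto

lemma Lk_zero: "Lk N k 0 = 0" by (simp add: Lk_def)

lemma Lk_node:
  assumes "N > 0" "1 \<le> k" "k < 2*N"
  shows "Lk N k (real k * pi / real N) = sin (real k * pi / real N / 2) * real N"
    and "Lk N k (real k * pi / real N) > 0"
proof -
  show e: "Lk N k (real k * pi / real N) = sin (real k * pi / real N / 2) * real N"
    by (simp add: Lk_def)
  have "real k * pi / real N > 0" using assms by simp
  moreover have "real k * pi / real N < 2 * pi"
    using assms by (simp add: field_simps)
  ultimately have "sin (real k * pi / real N / 2) > 0" by (rule sin_pos_half)
  then show "Lk N k (real k * pi / real N) > 0"
    unfolding e using assms by simp
qed

lemma sin_ne0_range: "-2*pi < y \<Longrightarrow> y < 2*pi \<Longrightarrow> y \<noteq> 0 \<Longrightarrow> sin (y/2) \<noteq> 0"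
proof -
  assume a: "-2*pi < y" "y < 2*pi" "y \<noteq> 0"
  show ?thesis
  proof (cases "y > 0")
    case True then show ?thesis using a sin_pos_half by force
  next
    case False
    then have "sin ((-y)/2) > 0" using a by (intro sin_pos_half) auto
    then show ?thesis by simp
  qed
qed

lemma Lk_other:
  assumes "N > 0" "1 \<le> k" "k < 2*N" "m < 2*N" "m \<noteq> k"
  shows "Lk N k (real m * pi / real N) = 0"
proof -
  have "sin ((real m * pi / real N - real k * pi / real N)/2) \<noteq> 0"
  proof (rule sin_ne0_range)
    have e: "real m * pi / real N - real k * pi / real N = (real m - real k) * pi / real N"
      by (simp add: diff_divide_distrib left_diff_distrib)
    have b1: "real m - real k < 2 * real N" "-(2 * real N) < real m - real k" using assms by linarith+
    have "(real m - real k) * pi < (2 * real N) * pi" using b1 by (intro mult_strict_right_mono) auto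
    then show "real m * pi / real N - real k * pi / real N < 2*pi"
      unfolding e using assms(1) by (simp add: pos_divide_less_eq mult_ac)
    have "(-(2 * real N)) * pi < (real m - real k) * pi" using b1 by (intro mult_strict_right_mono) auto
    then show "-2*pi < real m * pi / real N - real k * pi / real N"
      unfolding e using assms(1) by (simp add: pos_less_divide_eq mult_ac)
    show "real m * pi / real N - real k * pi / real N \<noteq> 0"
      unfolding e using assms by simp
  qed
  moreover have "real N * (real m * pi / real N) = real m * pi" using assms by simp
  ultimately show ?thesis using Lk_rel[OF assms(1), of "real m * pi / real N" k] by simp
qed

lemma Lk_deriv:
  assumes "N > 0" "1 \<le> k" "k < 2*N"
  shows "(Lk N k has_real_derivative 0) (at 0)"
proof -
  define S where "S t = (\<Sum>j<N. cos ((real j + 1/2) * (t - real k * pi / real N)))" for t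
  have L: "Lk N k = (\<lambda>t. sin (t/2) * S t)" unfolding Lk_def S_def by auto
  have "2 * sin ((0 - real k * pi / real N)/2) * S 0 = sin (real N * (0 - real k * pi / real N))"
    unfolding S_def by (rule tele)
  moreover have "sin (real N * (0 - real k * pi / real N)) = 0" using assms by simp
  moreover have "sin ((0 - real k * pi / real N)/2) \<noteq> 0"
  proof (rule sin_ne0_range)
    have "real k * pi / real N > 0" using assms by simp
    moreover have "real k * pi / real N < 2 * pi"
      using assms by (simp add: field_simps)
    ultimately show "-2*pi < 0 - real k * pi / real N" "0 - real k * pi / real N < 2*pi"
      "0 - real k * pi / real N \<noteq> 0" by linarith+
  qed
  ultimately have S0: "S 0 = 0" by simp
  have "(S has_real_derivative (\<Sum>j<N. - sin ((real j + 1/2) * (0 - real k * pi / real N)) * ((real j + 1/2) * (1 - 0)))) (at 0)"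
    unfolding S_def by (auto intro!: derivative_eq_intros)
  then have "((\<lambda>t. sin (t/2) * S t) has_real_derivative (cos (0/2) * (1/2) * S 0 + sin (0/2) * (\<Sum>j<N. - sin ((real j + 1/2) * (0 - real k * pi / real N)) * ((real j + 1/2) * (1 - 0))))) (at 0)"
    by (auto intro!: derivative_eq_intros)
  then show ?thesis unfolding L S0 by simp
qed

lemma tp0_const: assumes "tp 0 f" shows "f t = f 0"
proof -
  from assms obtain P where d: "degree P \<le> 0" and P: "\<forall>t. complex_of_real (f t) = cis (-(real 0 * t)) * poly P (cis t)"
    unfolding tp_def by auto
  have Pe: "P = [:coeff P 0:]" by (metis d degree_0_id le_zero_eq)
  have "poly P x = coeff P 0" for x using arg_cong[OF Pe, of "\<lambda>q. poly q x"] by simp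
  then have "complex_of_real (f s) = coeff P 0" for s using P by simp
  then have "complex_of_real (f t) = complex_of_real (f 0)" by simp
  then show ?thesis by (simp only: of_real_eq_iff)
qed

lemma tp_cos_bound_main:
  assumes N: "N > 0" and tpf: "tp N f" and bd: "\<forall>s. \<bar>f s\<bar> \<le> M" and f0: "f 0 = M"
    and t: "0 < t" "real N * t < pi"
  shows "M * cos (real N * t) \<le> f t"
proof -
  define x where "x k = real k * pi / real N" for k
  define D where "D s = M * cos (real N * s) - f s" for s
  define E where "E s = D s - (\<Sum>k\<in>{1..<2*N}. D (x k) * Lk N k s / Lk N k (x k))" for s
  have tpD: "tp N D"
    unfolding D_def using tp_cos[of N 0] by (intro tp_diff tp_scale tpf) simp
  have tpE: "tp N E"
    unfolding E_def
    by (intro tp_diff tpD tp_sum) (auto intro!: tp_scale[of N "Lk N _" "_ / _", simplified] tp_Lk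
        simp: tp_scale[of N "Lk N _", unfolded times_divide_eq_left] mult.commute)
  obtain Df where Df: "(f has_real_derivative Df) (at 0)" using tp_deriv_exists[OF tpf] by blast
  have "Df = 0"
  proof (rule DERIV_local_max[OF Df, of 1])
    show "\<forall>y. \<bar>0 - y\<bar> < 1 \<longrightarrow> f y \<le> f 0"
      using bd f0 by (metis abs_ge_self order_trans)
  qed simp
  with Df have Df0: "(f has_real_derivative 0) (at 0)" by simp
  have dD: "(D has_real_derivative 0) (at 0)"
  proof -
    have c: "((\<lambda>s. cos (real N * s)) has_real_derivative (- sin (real N * 0) * real N)) (at 0)"
      by (auto intro!: derivative_eq_intros)
    have "((\<lambda>s. M * cos (real N * s) - f s) has_real_derivative (M * (- sin (real N * 0) * real N) - 0)) (at 0)"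
      by (intro DERIV_diff DERIV_cmult Df0 c)
    then show ?thesis unfolding D_def[abs_def] by simp
  qed
  have dE: "(E has_real_derivative 0) (at 0)"
  proof -
    have "((\<lambda>s. D s - (\<Sum>k\<in>{1..<2*N}. D (x k) * Lk N k s / Lk N k (x k))) has_real_derivative
        (0 - (\<Sum>k\<in>{1..<2*N}. D (x k) * 0 / Lk N k (x k)))) (at 0)"
    proof (rule DERIV_diff[OF dD])
      show "((\<lambda>s. \<Sum>k\<in>{1..<2*N}. D (x k) * Lk N k s / Lk N k (x k)) has_real_derivative
         (\<Sum>k\<in>{1..<2*N}. D (x k) * 0 / Lk N k (x k))) (at 0)"
      proof (rule DERIV_sum)
        fix k assume "k \<in> {1..<2*N}"
        then show "((\<lambda>s. D (x k) * Lk N k s / Lk N k (x k)) has_real_derivative (D (x k) * 0 / Lk N k (x k))) (at 0)"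
          by (intro DERIV_cdivide DERIV_cmult Lk_deriv[OF N]) auto
      qed
    qed
    then show ?thesis unfolding E_def[abs_def] by simp
  qed
  have D0: "D 0 = 0" using f0 by (simp add: D_def)
  have Ez: "\<forall>m<2*N. E (real m * pi / real N) = 0"
  proof (intro allI impI)
    fix m assume m: "m < 2*N"
    show "E (real m * pi / real N) = 0"
    proof (cases "m = 0")
      case True then show ?thesis using D0 by (simp add: E_def Lk_zero)
    next
      case False
      have "(\<Sum>k\<in>{1..<2*N}. D (x k) * Lk N k (x m) / Lk N k (x k)) =
            (\<Sum>k\<in>{1..<2*N}. if k = m then D (x m) else 0)"
      proof (rule sum.cong[OF refl])
        fix k assume k: "k \<in> {1..<2*N}"
        show "D (x k) * Lk N k (x m) / Lk N k (x k) = (if k = m then D (x m) else 0)"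
        proof (cases "k = m")
          case True
          then show ?thesis using Lk_node(2)[OF N, of k] k by (simp add: x_def)
        next
          case False
          then show ?thesis using Lk_other[OF N _ _ m, of k] k by (simp add: x_def)
        qed
      qed
      also have "\<dots> = D (x m)" using False m by simp
      finally show ?thesis by (simp add: E_def x_def)
    qed
  qed
  have "E t = 0" by (rule tp_unique0[OF N tpE Ez dE])
  then have Dt: "D t = (\<Sum>k\<in>{1..<2*N}. D (x k) * Lk N k t / Lk N k (x k))"
    by (simp add: E_def)
  have "(\<Sum>k\<in>{1..<2*N}. D (x k) * Lk N k t / Lk N k (x k)) \<le> 0"
  proof (rule sum_nonpos)
    fix k assume k: "k \<in> {1..<2*N}"
    then have k1: "1 \<le> k" "k < 2*N" by auto
    have pos: "Lk N k (x k) > 0" using Lk_node(2)[OF N k1] by (simp add: x_def)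
    have Dk: "(-1)^k * D (x k) \<ge> 0"
    proof -
      have "real N * x k = real k * pi" using N by (simp add: x_def)
      then have "D (x k) = M * (-1)^k - f (x k)" by (simp add: D_def)
      then have "(-1)^k * D (x k) = M - (-1)^k * f (x k)"
        by (cases "even k") auto
      moreover have "(-1)^k * f (x k) \<le> M"
        using bd[rule_format, of "x k"] by (cases "even k") auto
      ultimately show ?thesis by simp
    qed
    have Lt: "(-1)^k * Lk N k t < 0"
    proof -
      have r: "sin ((t - real k * pi / real N)/2) * ((-1)^k * Lk N k t) = sin (t/2) * sin (real N * t) / 2"
        using Lk_rel[OF N, of t k] by (cases "even k") (auto simp: algebra_simps)
      have tN: "t \<le> real N * t" using N t(1) by (simp add: mult_le_cancel_right1)
      have "t < 2 * pi" using tN t pi_gt_zero by linarith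
      then have "sin (t/2) > 0" using t by (intro sin_pos_half) auto
      moreover have "sin (real N * t) > 0" using t N by (intro sin_gt_zero) auto
      ultimately have "sin (t/2) * sin (real N * t) / 2 > 0" by simp
      then have "sin ((t - real k * pi / real N)/2) * ((-1)^k * Lk N k t) > 0" unfolding r .
      moreover have "sin ((t - real k * pi / real N)/2) < 0"
      proof -
        have "t < pi / real N" using t N by (simp add: field_simps)
        also have "pi / real N \<le> real k * pi / real N" using k1 by (simp add: divide_right_mono)
        finally have a: "t - real k * pi / real N < 0" by simp
        have "real k * pi / real N < 2 * pi" using k1 N by (simp add: field_simps)
        then have b: "-2*pi < t - real k * pi / real N" using t by simp
        have "sin (-(t - real k * pi / real N)/2) > 0"
          by (rule sin_pos_half) (use a b in auto)
        moreover have "\<And>y::real. y/2 = - ((-y)/2)" by simp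
        ultimately show ?thesis by (metis neg_less_0_iff_less sin_minus minus_divide_left)
      qed
      ultimately show ?thesis by (simp add: zero_less_mult_iff)
    qed
    have "D (x k) * Lk N k t / Lk N k (x k) = ((-1)^k * D (x k)) * ((-1)^k * Lk N k t) / Lk N k (x k)"
      by (cases "even k") auto
    also have "\<dots> \<le> 0"
      by (rule divide_nonpos_pos[OF mult_nonneg_nonpos[OF Dk less_imp_le[OF Lt]] pos])
    finally show "D (x k) * Lk N k t / Lk N k (x k) \<le> 0" .
  qed
  with Dt have "D t \<le> 0" by simp
  then show ?thesis by (simp add: D_def)
qed

lemma tp_cos_bound:
  assumes tpf: "tp N f" and bd: "\<forall>s. \<bar>f s\<bar> \<le> M" and f0: "f 0 = M"
    and t: "0 \<le> t" "real N * t \<le> pi"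
  shows "M * cos (real N * t) \<le> f t"
proof (cases "N = 0")
  case True
  then have "tp 0 f" using tpf by simp
  then have "f t = f 0" by (rule tp0_const)
  then show ?thesis using True f0 by simp
next
  case False
  then have N: "N > 0" by simp
  show ?thesis
  proof (cases "t = 0")
    case True then show ?thesis using f0 by simp
  next
    case False
    show ?thesis
    proof (cases "real N * t = pi")
      case True
      then show ?thesis using bd[rule_format, of t] by simp
    next
      case False
      then have "real N * t < pi" using t by simp
      moreover have "0 < t" using t \<open>t \<noteq> 0\<close> by simp
      ultimately show ?thesis using tp_cos_bound_main[OF N tpf bd f0] by blast
    qed
  qed
qed

lemma tp_power: "tp N f \<Longrightarrow> tp (k * N) (\<lambda>t. f t ^ k)"
proof (induction k)
  case 0 then show ?case using tp_const[of 0 1] by simp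
next
  case (Suc k)
  then show ?case using tp_mult[OF Suc.prems Suc.IH[OF Suc.prems]] by (simp add: add.commute)
qed

lemma tp_cos_int: "tp (nat \<bar>a\<bar>) (\<lambda>u. cos (th + of_int a * u))"
proof (cases "a \<ge> 0")
  case True
  have "(\<lambda>u. cos (th + of_int a * u)) = (\<lambda>u. cos (real (nat \<bar>a\<bar>) * u + th))"
    using True by (auto simp: add.commute)
  then show ?thesis using tp_cos[of "nat \<bar>a\<bar>" th] by simp
next
  case False
  have "(\<lambda>u. cos (th + of_int a * u)) = (\<lambda>u. cos (real (nat \<bar>a\<bar>) * u + (-th)))"
  proof
    fix u
    have "cos (th + of_int a * u) = cos (-(th + of_int a * u))" by (rule cos_minus[symmetric])
    also have "-(th + of_int a * u) = real (nat \<bar>a\<bar>) * u + (-th)" using False by simp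
    finally show "cos (th + of_int a * u) = cos (real (nat \<bar>a\<bar>) * u + (-th))" .
  qed
  then show ?thesis using tp_cos[of "nat \<bar>a\<bar>" "-th"] by simp
qed

lemma bipoly_tp:
  assumes "bipoly n p"
  shows "tp (n * max (nat \<bar>a\<bar>) (nat \<bar>b\<bar>)) (\<lambda>u. p (cos (th + of_int a * u), cos (ph + of_int b * u)))"
proof -
  from assms obtain c where c: "\<forall>x y. p (x, y) = (\<Sum>i\<le>n. \<Sum>j\<le>n - i. c i j * x ^ i * y ^ j)"
    unfolding bipoly_def by blast
  let ?K = "max (nat \<bar>a\<bar>) (nat \<bar>b\<bar>)"
  have "tp (n * ?K) (\<lambda>u. \<Sum>i\<le>n. \<Sum>j\<le>n - i. c i j * cos (th + of_int a * u) ^ i * cos (ph + of_int b * u) ^ j)"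
  proof (intro tp_sum)
    fix i j assume i: "i \<in> {..n}" and j: "j \<in> {..n-i}"
    have t1: "tp (i * nat \<bar>a\<bar> + j * nat \<bar>b\<bar>) (\<lambda>u. cos (th + of_int a * u) ^ i * cos (ph + of_int b * u) ^ j)"
      by (intro tp_mult tp_power tp_cos_int)
    have "i * nat \<bar>a\<bar> + j * nat \<bar>b\<bar> \<le> i * ?K + j * ?K"
      by (intro add_mono mult_le_mono2) auto
    also have "\<dots> = (i + j) * ?K" by (simp add: add_mult_distrib)
    also have "\<dots> \<le> n * ?K" using i j by (intro mult_le_mono1) auto
    finally have "tp (n * ?K) (\<lambda>u. cos (th + of_int a * u) ^ i * cos (ph + of_int b * u) ^ j)"
      by (rule tp_mono[OF t1])
    then show "tp (n * ?K) (\<lambda>u. c i j * cos (th + of_int a * u) ^ i * cos (ph + of_int b * u) ^ j)"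
      using tp_scale[of "n * ?K" _ "c i j"] by (simp add: mult.assoc)
  qed auto
  then show ?thesis using c by simp
qed

lemma floor_lim: "(\<lambda>k. of_int \<lfloor>real k * r\<rfloor> / real k) \<longlonglongrightarrow> r"
proof (rule tendsto_sandwich[of "\<lambda>k. r - 1 / real k" _ sequentially "\<lambda>k. r"])
  show "\<forall>\<^sub>F k in sequentially. r - 1 / real k \<le> of_int \<lfloor>real k * r\<rfloor> / real k"
  proof (rule eventually_sequentiallyI[of 1])
    fix k :: nat assume k: "1 \<le> k"
    have "real k * r - 1 \<le> of_int \<lfloor>real k * r\<rfloor>" by linarith
    then have "(real k * r - 1) / real k \<le> of_int \<lfloor>real k * r\<rfloor> / real k"
      using k by (intro divide_right_mono) auto
    moreover have "(real k * r - 1) / real k = r - 1 / real k" using k by (simp add: field_simps)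
    ultimately show "r - 1 / real k \<le> of_int \<lfloor>real k * r\<rfloor> / real k" by simp
  qed
  show "\<forall>\<^sub>F k in sequentially. of_int \<lfloor>real k * r\<rfloor> / real k \<le> r"
  proof (rule eventually_sequentiallyI[of 1])
    fix k :: nat assume k: "1 \<le> k"
    have "of_int \<lfloor>real k * r\<rfloor> \<le> real k * r" by linarith
    then have "of_int \<lfloor>real k * r\<rfloor> / real k \<le> real k * r / real k"
      using k by (intro divide_right_mono) auto
    then show "of_int \<lfloor>real k * r\<rfloor> / real k \<le> r" using k by simp
  qed
  show "(\<lambda>k. r - 1 / real k) \<longlonglongrightarrow> r"
    using tendsto_diff[OF tendsto_const lim_1_over_n, of r] by simp
qed simp

lemma floor_bound: assumes "\<bar>r\<bar> \<le> 1" shows "nat \<bar>\<lfloor>real k * r\<rfloor>\<bar> \<le> k"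
proof -
  have "\<bar>real k * r\<bar> \<le> real k"
    using assms mult_left_mono[of "\<bar>r\<bar>" 1 "real k"] by (simp add: abs_mult)
  then have "- real k \<le> real k * r" "real k * r \<le> real k" by (simp_all add: abs_le_iff)
  then have "- int k \<le> \<lfloor>real k * r\<rfloor>" "\<lfloor>real k * r\<rfloor> \<le> int k"
    by (simp_all add: le_floor_iff floor_le_iff)
  then show ?thesis by linarith
qed

lemma int_dir:
  assumes bp: "bipoly n p" and bd: "\<forall>th ph. \<bar>p (cos th, cos ph)\<bar> \<le> M" and mx: "p (cos th0, cos ph0) = M"
    and u: "real (n * max (nat \<bar>a\<bar>) (nat \<bar>b\<bar>)) * \<bar>u\<bar> \<le> pi"
  shows "M * cos (real (n * max (nat \<bar>a\<bar>) (nat \<bar>b\<bar>)) * \<bar>u\<bar>) \<le> p (cos (th0 + of_int a * u), cos (ph0 + of_int b * u))"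
proof (cases "u \<ge> 0")
  case True
  have "M * cos (real (n * max (nat \<bar>a\<bar>) (nat \<bar>b\<bar>)) * u) \<le> (\<lambda>u. p (cos (th0 + of_int a * u), cos (ph0 + of_int b * u))) u"
  proof (rule tp_cos_bound[OF bipoly_tp[OF bp]])
    show "\<forall>s. \<bar>p (cos (th0 + of_int a * s), cos (ph0 + of_int b * s))\<bar> \<le> M" using bd by blast
    show "p (cos (th0 + of_int a * 0), cos (ph0 + of_int b * 0)) = M" using mx by simp
    show "0 \<le> u" by (rule True)
    show "real (n * max (nat \<bar>a\<bar>) (nat \<bar>b\<bar>)) * u \<le> pi" using u True by simp
  qed
  then show ?thesis using True by simp
next
  case False
  have "M * cos (real (n * max (nat \<bar>-a\<bar>) (nat \<bar>-b\<bar>)) * (-u)) \<le> (\<lambda>u. p (cos (th0 + of_int (-a) * u), cos (ph0 + of_int (-b) * u))) (-u)"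
  proof (rule tp_cos_bound[OF bipoly_tp[OF bp]])
    show "\<forall>s. \<bar>p (cos (th0 + of_int (-a) * s), cos (ph0 + of_int (-b) * s))\<bar> \<le> M" using bd by blast
    show "p (cos (th0 + of_int (-a) * 0), cos (ph0 + of_int (-b) * 0)) = M" using mx by simp
    show "0 \<le> -u" using False by simp
    show "real (n * max (nat \<bar>-a\<bar>) (nat \<bar>-b\<bar>)) * (-u) \<le> pi" using u False by simp
  qed
  then show ?thesis using False by simp
qed

lemma bipoly_cont:
  assumes "bipoly n p"
  shows "isCont (\<lambda>y. p (f0, cos (ph + y))) y0" "isCont (\<lambda>x. p (cos (th + x), g0)) x0"
    and "continuous_on S p"
proof -
  from assms obtain c where c: "\<forall>x y. p (x, y) = (\<Sum>i\<le>n. \<Sum>j\<le>n - i. c i j * x ^ i * y ^ j)"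
    unfolding bipoly_def by blast
  have pe: "p = (\<lambda>z. \<Sum>i\<le>n. \<Sum>j\<le>n - i. c i j * fst z ^ i * snd z ^ j)"
    using c by (auto simp: fun_eq_iff)
  show "isCont (\<lambda>y. p (f0, cos (ph + y))) y0" unfolding pe by (intro continuous_intros)
  show "isCont (\<lambda>x. p (cos (th + x), g0)) x0" unfolding pe by (intro continuous_intros)
  show "continuous_on S p" unfolding pe by (intro continuous_intros)
qed

lemma gen_dir:
  assumes bp: "bipoly n p" and bd: "\<forall>th ph. \<bar>p (cos th, cos ph)\<bar> \<le> M" and mx: "p (cos th0, cos ph0) = M"
    and r: "real n * max \<bar>\<alpha>\<bar> \<bar>\<beta>\<bar> \<le> pi"
  shows "M * cos (real n * max \<bar>\<alpha>\<bar> \<bar>\<beta>\<bar>) \<le> p (cos (th0 + \<alpha>), cos (ph0 + \<beta>))"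
proof (cases "\<alpha> = 0 \<and> \<beta> = 0")
  case True then show ?thesis using mx by simp
next
  case False
  show ?thesis
  proof (cases "\<bar>\<beta>\<bar> \<le> \<bar>\<alpha>\<bar>")
    case True
    then have a0: "\<alpha> \<noteq> 0" using False by auto
    define r where "r = \<beta> / \<alpha>"
    have r1: "\<bar>r\<bar> \<le> 1" using True a0 by (simp add: r_def abs_divide divide_le_eq_1)
    define y where "y k = of_int \<lfloor>real k * r\<rfloor> * (\<alpha> / real k)" for k :: nat
    have ylim: "y \<longlonglongrightarrow> \<beta>"
    proof -
      have "(\<lambda>k. of_int \<lfloor>real k * r\<rfloor> / real k * \<alpha>) \<longlonglongrightarrow> r * \<alpha>"
        by (intro tendsto_mult floor_lim tendsto_const)
      moreover have "r * \<alpha> = \<beta>" using a0 by (simp add: r_def)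
      moreover have "y = (\<lambda>k. of_int \<lfloor>real k * r\<rfloor> / real k * \<alpha>)" by (simp add: y_def fun_eq_iff)
      ultimately show ?thesis by simp
    qed
    have "\<forall>k\<ge>1. M * cos (real n * max \<bar>\<alpha>\<bar> \<bar>\<beta>\<bar>) \<le> p (cos (th0 + \<alpha>), cos (ph0 + y k))"
    proof (intro allI impI)
      fix k :: nat assume k: "k \<ge> 1"
      have mk: "max (nat \<bar>int k\<bar>) (nat \<bar>\<lfloor>real k * r\<rfloor>\<bar>) = k"
        using floor_bound[OF r1, of k] by simp
      have e1: "real (n * max (nat \<bar>int k\<bar>) (nat \<bar>\<lfloor>real k * r\<rfloor>\<bar>)) * \<bar>\<alpha> / real k\<bar> = real n * max \<bar>\<alpha>\<bar> \<bar>\<beta>\<bar>"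
      proof -
        have "max \<bar>\<alpha>\<bar> \<bar>\<beta>\<bar> = \<bar>\<alpha>\<bar>" using True by simp
        moreover have "real (n * k) * \<bar>\<alpha> / real k\<bar> = real n * \<bar>\<alpha>\<bar>" using k by (simp add: abs_divide)
        ultimately show ?thesis unfolding mk by simp
      qed
      have e2: "th0 + of_int (int k) * (\<alpha> / real k) = th0 + \<alpha>" using k by simp
      show "M * cos (real n * max \<bar>\<alpha>\<bar> \<bar>\<beta>\<bar>) \<le> p (cos (th0 + \<alpha>), cos (ph0 + y k))"
      proof -
        have pr: "real (n * max (nat \<bar>int k\<bar>) (nat \<bar>\<lfloor>real k * r\<rfloor>\<bar>)) * \<bar>\<alpha> / real k\<bar> \<le> pi"
          unfolding e1 by (rule assms(4))
        show ?thesis using int_dir[OF bp bd mx pr] unfolding e1 e2 y_def .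
      qed
    qed
    moreover have "(\<lambda>k. p (cos (th0 + \<alpha>), cos (ph0 + y k))) \<longlonglongrightarrow> p (cos (th0 + \<alpha>), cos (ph0 + \<beta>))"
      by (rule isCont_tendsto_compose[OF bipoly_cont(1)[OF bp] ylim])
    ultimately show ?thesis by (intro LIMSEQ_le_const[of _ _ "M * cos (real n * max \<bar>\<alpha>\<bar> \<bar>\<beta>\<bar>)"]) blast+
  next
    case False
    then have b0: "\<beta> \<noteq> 0" and le: "\<bar>\<alpha>\<bar> \<le> \<bar>\<beta>\<bar>" by auto
    define r where "r = \<alpha> / \<beta>"
    have r1: "\<bar>r\<bar> \<le> 1" using le b0 by (simp add: r_def abs_divide divide_le_eq_1)
    define y where "y k = of_int \<lfloor>real k * r\<rfloor> * (\<beta> / real k)" for k :: nat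
    have ylim: "y \<longlonglongrightarrow> \<alpha>"
    proof -
      have "(\<lambda>k. of_int \<lfloor>real k * r\<rfloor> / real k * \<beta>) \<longlonglongrightarrow> r * \<beta>"
        by (intro tendsto_mult floor_lim tendsto_const)
      moreover have "r * \<beta> = \<alpha>" using b0 by (simp add: r_def)
      moreover have "y = (\<lambda>k. of_int \<lfloor>real k * r\<rfloor> / real k * \<beta>)" by (simp add: y_def fun_eq_iff)
      ultimately show ?thesis by simp
    qed
    have "\<forall>k\<ge>1. M * cos (real n * max \<bar>\<alpha>\<bar> \<bar>\<beta>\<bar>) \<le> p (cos (th0 + y k), cos (ph0 + \<beta>))"
    proof (intro allI impI)
      fix k :: nat assume k: "k \<ge> 1"
      have mk: "max (nat \<bar>\<lfloor>real k * r\<rfloor>\<bar>) (nat \<bar>int k\<bar>) = k"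
        using floor_bound[OF r1, of k] by simp
      have e1: "real (n * max (nat \<bar>\<lfloor>real k * r\<rfloor>\<bar>) (nat \<bar>int k\<bar>)) * \<bar>\<beta> / real k\<bar> = real n * max \<bar>\<alpha>\<bar> \<bar>\<beta>\<bar>"
      proof -
        have "max \<bar>\<alpha>\<bar> \<bar>\<beta>\<bar> = \<bar>\<beta>\<bar>" using le by simp
        moreover have "real (n * k) * \<bar>\<beta> / real k\<bar> = real n * \<bar>\<beta>\<bar>" using k by (simp add: abs_divide)
        ultimately show ?thesis unfolding mk by simp
      qed
      have e2: "ph0 + of_int (int k) * (\<beta> / real k) = ph0 + \<beta>" using k by simp
      show "M * cos (real n * max \<bar>\<alpha>\<bar> \<bar>\<beta>\<bar>) \<le> p (cos (th0 + y k), cos (ph0 + \<beta>))"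
      proof -
        have pr: "real (n * max (nat \<bar>\<lfloor>real k * r\<rfloor>\<bar>) (nat \<bar>int k\<bar>)) * \<bar>\<beta> / real k\<bar> \<le> pi"
          unfolding e1 by (rule assms(4))
        show ?thesis using int_dir[OF bp bd mx pr] unfolding e1 e2 y_def .
      qed
    qed
    moreover have "(\<lambda>k. p (cos (th0 + y k), cos (ph0 + \<beta>))) \<longlonglongrightarrow> p (cos (th0 + \<alpha>), cos (ph0 + \<beta>))"
      by (rule isCont_tendsto_compose[OF bipoly_cont(2)[OF bp] ylim])
    ultimately show ?thesis by (intro LIMSEQ_le_const[of _ _ "M * cos (real n * max \<bar>\<alpha>\<bar> \<bar>\<beta>\<bar>)"]) blast+
  qed
qed

lemma idx_A:
  fixes m1 j1 \<nu> :: nat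
  assumes a: "m1 \<le> \<nu>+1" "j1 \<le> \<nu>+2"
  shows "\<exists>m j. (m = m1 \<or> m = m1+1) \<and> (j = j1 \<or> j = j1+1) \<and>
  ((1 \<le> m \<and> m \<le> \<nu>+1 \<and> 1 \<le> j \<and> j \<le> \<nu>+2 \<and> odd (m+j)) \<or> (m = 0 \<and> j = 0) \<or>
   (even \<nu> \<and> m = \<nu>+2 \<and> j = 0) \<or> (odd \<nu> \<and> m = 0 \<and> j = \<nu>+3))"
proof (cases "odd (m1+j1)")
  case True
  show ?thesis
  proof (cases "1 \<le> m1 \<and> 1 \<le> j1")
    case True2: True
    show ?thesis by (rule exI[of _ m1], rule exI[of _ j1]) (use a True True2 in auto)
  next
    case F2: False
    show ?thesis
    proof (cases "m1 \<le> \<nu> \<and> j1 \<le> \<nu>+1")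
      case True3: True
      show ?thesis by (rule exI[of _ "m1+1"], rule exI[of _ "j1+1"]) (use a True True3 in auto)
    next
      case F3: False
      show ?thesis
      proof (cases "m1 = 0")
        case True4: True
        then have "j1 = \<nu>+2" using F3 a by auto
        then show ?thesis using True True4 by (intro exI[of _ "0"] exI[of _ "\<nu>+3"]) auto
      next
        case False
        then have "j1 = 0" "m1 = \<nu>+1" using F2 F3 a by auto
        then show ?thesis using True by (intro exI[of _ "\<nu>+2"] exI[of _ "0"]) auto
      qed
    qed
  qed
next
  case False
  show ?thesis
  proof (cases "1 \<le> m1 \<and> j1 \<le> \<nu>+1")
    case True2: True
    show ?thesis by (rule exI[of _ m1], rule exI[of _ "j1+1"]) (use a False True2 in auto)
  next
    case F2: False
    show ?thesis
    proof (cases "m1 \<le> \<nu> \<and> 1 \<le> j1")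
      case True3: True
      show ?thesis by (rule exI[of _ "m1+1"], rule exI[of _ "j1"]) (use a False True3 in auto)
    next
      case F3: False
      have "m1 = 0 \<and> j1 = 0 \<or> (m1 = \<nu>+1 \<and> j1 = \<nu>+2)" using F2 F3 a by auto
      moreover have "\<not> (m1 = \<nu>+1 \<and> j1 = \<nu>+2)" using False by auto
      ultimately have "m1 = 0" "j1 = 0" by auto
      then show ?thesis by (intro exI[of _ "0"] exI[of _ "0"]) auto
    qed
  qed
qed

lemma idx_B:
  fixes m1 j1 \<nu> :: nat
  assumes a: "m1 \<le> \<nu>+1" "j1 \<le> \<nu>+2"
  shows "\<exists>m j. (m = m1 \<or> m = m1+1) \<and> (j = j1 \<or> j = j1+1) \<and>
  ((1 \<le> m \<and> m \<le> \<nu>+1 \<and> 1 \<le> j \<and> j \<le> \<nu>+2 \<and> odd (m+j)) \<or> (m = 1 \<and> j = 1) \<or>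
   (even \<nu> \<and> m = \<nu>+1 \<and> j = 1) \<or> (odd \<nu> \<and> m = 1 \<and> j = \<nu>+2))"
proof (cases "odd (m1+j1)")
  case True
  show ?thesis
  proof (cases "1 \<le> m1 \<and> 1 \<le> j1")
    case True2: True
    show ?thesis by (rule exI[of _ m1], rule exI[of _ j1]) (use a True True2 in auto)
  next
    case F2: False
    show ?thesis
    proof (cases "m1 \<le> \<nu> \<and> j1 \<le> \<nu>+1")
      case True3: True
      show ?thesis by (rule exI[of _ "m1+1"], rule exI[of _ "j1+1"]) (use a True True3 in auto)
    next
      case F3: False
      show ?thesis
      proof (cases "m1 = 0")
        case True4: True
        then have "j1 = \<nu>+2" using F3 a by auto
        then show ?thesis using True True4 by (intro exI[of _ "1"] exI[of _ "\<nu>+2"]) auto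
      next
        case False
        then have "j1 = 0" "m1 = \<nu>+1" using F2 F3 a by auto
        then show ?thesis using True by (intro exI[of _ "\<nu>+1"] exI[of _ "1"]) auto
      qed
    qed
  qed
next
  case False
  show ?thesis
  proof (cases "1 \<le> m1 \<and> j1 \<le> \<nu>+1")
    case True2: True
    show ?thesis by (rule exI[of _ m1], rule exI[of _ "j1+1"]) (use a False True2 in auto)
  next
    case F2: False
    show ?thesis
    proof (cases "m1 \<le> \<nu> \<and> 1 \<le> j1")
      case True3: True
      show ?thesis by (rule exI[of _ "m1+1"], rule exI[of _ "j1"]) (use a False True3 in auto)
    next
      case F3: False
      have "m1 = 0 \<and> j1 = 0 \<or> (m1 = \<nu>+1 \<and> j1 = \<nu>+2)" using F2 F3 a by auto
      moreover have "\<not> (m1 = \<nu>+1 \<and> j1 = \<nu>+2)" using False by auto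
      ultimately have "m1 = 0" "j1 = 0" by auto
      then show ?thesis by (intro exI[of _ "1"] exI[of _ "1"]) auto
    qed
  qed
qed

lemma idx_MP:
  fixes m1 j1 \<nu> :: nat
  assumes a: "m1 \<le> \<nu>+1" "j1 \<le> \<nu>+2"
  shows "\<exists>m j. m1 \<le> m+1 \<and> m \<le> m1+2 \<and> j1 \<le> j+1 \<and> j \<le> j1+2 \<and>
  (1 \<le> m \<and> m \<le> \<nu>+1 \<and> 1 \<le> j \<and> j \<le> \<nu>+2 \<and> odd (m+j))"
proof (cases "odd (m1+j1)")
  case True
  show ?thesis
  proof (cases "1 \<le> m1 \<and> 1 \<le> j1")
    case True2: True
    show ?thesis by (rule exI[of _ m1], rule exI[of _ j1]) (use a True True2 in auto)
  next
    case F2: False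
    show ?thesis
    proof (cases "m1 \<le> \<nu> \<and> j1 \<le> \<nu>+1")
      case True3: True
      show ?thesis by (rule exI[of _ "m1+1"], rule exI[of _ "j1+1"]) (use a True True3 in auto)
    next
      case F3: False
      show ?thesis
      proof (cases "m1 = 0")
        case True4: True
        then have j: "j1 = \<nu>+2" using F3 a by auto
        then have "odd \<nu>" using True True4 by auto
        then have "1 \<le> \<nu>" by (cases \<nu>) auto
        then show ?thesis using True True4 j \<open>odd \<nu>\<close> by (intro exI[of _ "2"] exI[of _ "\<nu>+2"]) auto
      next
        case False
        then have "j1 = 0" "m1 = \<nu>+1" using F2 F3 a by auto
        then show ?thesis using True by (intro exI[of _ "\<nu>+1"] exI[of _ "2"]) auto
      qed
    qed
  qed
next
  case False
  show ?thesis
  proof (cases "1 \<le> m1 \<and> j1 \<le> \<nu>+1")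
    case True2: True
    show ?thesis by (rule exI[of _ m1], rule exI[of _ "j1+1"]) (use a False True2 in auto)
  next
    case F2: False
    show ?thesis
    proof (cases "m1 \<le> \<nu> \<and> 1 \<le> j1")
      case True3: True
      show ?thesis by (rule exI[of _ "m1+1"], rule exI[of _ "j1"]) (use a False True3 in auto)
    next
      case F3: False
      have "m1 = 0 \<and> j1 = 0 \<or> (m1 = \<nu>+1 \<and> j1 = \<nu>+2)" using F2 F3 a by auto
      moreover have "\<not> (m1 = \<nu>+1 \<and> j1 = \<nu>+2)" using False by auto
      ultimately have "m1 = 0" "j1 = 0" by auto
      then show ?thesis by (intro exI[of _ "1"] exI[of _ "2"]) auto
    qed
  qed
qed

lemma bipoly_add: "bipoly n p \<Longrightarrow> bipoly n q \<Longrightarrow> bipoly n (\<lambda>z. p z + q z)"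
  unfolding bipoly_def
  apply (elim exE)
  subgoal for c d
    by (rule exI[of _ "\<lambda>i j. c i j + d i j"]) (simp add: sum.distrib distrib_right)
  done

lemma bipoly_scale: "bipoly n p \<Longrightarrow> bipoly n (\<lambda>z. a * p z)"
  unfolding bipoly_def
  apply (elim exE)
  subgoal for c
    by (rule exI[of _ "\<lambda>i j. a * c i j"]) (simp add: sum_distrib_left mult.assoc)
  done

lemma bipoly_zero: "bipoly n (\<lambda>z. 0)"
  unfolding bipoly_def by (rule exI[of _ "\<lambda>i j. 0"]) simp

lemma bipoly_sum: "finite A \<Longrightarrow> (\<And>s. s \<in> A \<Longrightarrow> bipoly n (f s)) \<Longrightarrow> bipoly n (\<lambda>z. \<Sum>s\<in>A. f s z)"
proof (induction A rule: finite_induct)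
  case empty then show ?case using bipoly_zero by simp
next
  case (insert x F)
  then show ?case using bipoly_add[of n "f x" "\<lambda>z. \<Sum>s\<in>F. f s z"] by simp
qed

lemma Qsq_compact: "compact Qsq" unfolding Qsq_def by (intro compact_Times compact_Icc)

lemma Qsq_ne: "(0,0) \<in> Qsq" unfolding Qsq_def by auto

lemma cos_in_Qsq: "(cos a, cos b) \<in> Qsq" unfolding Qsq_def by auto

lemma bipoly_max:
  assumes "bipoly n p" shows "\<exists>z0\<in>Qsq. \<forall>z\<in>Qsq. \<bar>p z\<bar> \<le> \<bar>p z0\<bar>"
proof -
  have "continuous_on Qsq (\<lambda>z. \<bar>p z\<bar>)"
    by (intro continuous_intros bipoly_cont(3)[OF assms])
  then show ?thesis using continuous_attains_sup[OF Qsq_compact _] Qsq_ne by blast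
qed

lemma bipoly_bdd: assumes "bipoly n p" shows "bdd_above ((\<lambda>z. \<bar>p z\<bar>) ` Qsq)"
  using bipoly_max[OF assms] by (auto simp: bdd_above_def)

lemma supnorm_finite_upper: "finite X \<Longrightarrow> z \<in> X \<Longrightarrow> \<bar>g z\<bar> \<le> supnorm X g"
  unfolding supnorm_def by (intro cSUP_upper) auto

lemma mesh_bound:
  assumes bp: "bipoly n p" and mu: "\<mu> > 2" and fin: "finite X"
    and cover: "\<And>th ph. 0 \<le> th \<Longrightarrow> th \<le> pi \<Longrightarrow> 0 \<le> ph \<Longrightarrow> ph \<le> pi \<Longrightarrow>
        \<exists>\<alpha> \<beta>. (cos (th + \<alpha>), cos (ph + \<beta>)) \<in> X \<and> real n * max \<bar>\<alpha>\<bar> \<bar>\<beta>\<bar> \<le> pi / \<mu>"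
  shows "supnorm Qsq p \<le> (1 / cos (pi / \<mu>)) * supnorm X p"
proof -
  obtain z0 where z0: "z0 \<in> Qsq" "\<forall>z\<in>Qsq. \<bar>p z\<bar> \<le> \<bar>p z0\<bar>" using bipoly_max[OF bp] by blast
  define M where "M = \<bar>p z0\<bar>"
  have sup: "supnorm Qsq p = M"
    unfolding supnorm_def M_def by (rule cSup_eq_maximum) (use z0 in auto)
  obtain x0 y0 where xy: "z0 = (x0, y0)" by (cases z0)
  have x0: "-1 \<le> x0" "x0 \<le> 1" and y0: "-1 \<le> y0" "y0 \<le> 1" using z0(1) unfolding xy Qsq_def by auto
  define th0 where "th0 = arccos x0"
  define ph0 where "ph0 = arccos y0"
  have cth: "cos th0 = x0" "0 \<le> th0" "th0 \<le> pi" unfolding th0_def using x0 arccos_lbound arccos_ubound by auto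
  have cph: "cos ph0 = y0" "0 \<le> ph0" "ph0 \<le> pi" unfolding ph0_def using y0 arccos_lbound arccos_ubound by auto
  define q where "q = (if p z0 \<ge> 0 then p else (\<lambda>z. (-1) * p z))"
  have bq: "bipoly n q" unfolding q_def using bp bipoly_scale[OF bp, of "-1"] by (simp only: if_split) blast
  have qabs: "\<bar>q z\<bar> = \<bar>p z\<bar>" for z unfolding q_def by simp
  have qmx: "q (cos th0, cos ph0) = M" unfolding q_def M_def cth cph xy[symmetric] by auto
  have qbd: "\<forall>th ph. \<bar>q (cos th, cos ph)\<bar> \<le> M"
    using z0(2) cos_in_Qsq qabs unfolding M_def by simp
  obtain \<alpha> \<beta> where ab: "(cos (th0 + \<alpha>), cos (ph0 + \<beta>)) \<in> X" "real n * max \<bar>\<alpha>\<bar> \<bar>\<beta>\<bar> \<le> pi / \<mu>"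
    using cover[OF cth(2,3) cph(2,3)] by blast
  have pimu: "pi / \<mu> < pi / 2" by (rule divide_strict_left_mono) (use mu in auto)
  have pimu0: "0 < pi / \<mu>" using mu by simp
  have "pi / 2 < pi" by simp
  then have r: "real n * max \<bar>\<alpha>\<bar> \<bar>\<beta>\<bar> \<le> pi" using ab(2) pimu by linarith
  have "M * cos (real n * max \<bar>\<alpha>\<bar> \<bar>\<beta>\<bar>) \<le> q (cos (th0 + \<alpha>), cos (ph0 + \<beta>))"
    by (rule gen_dir[OF bq qbd qmx r])
  also have "\<dots> \<le> \<bar>p (cos (th0 + \<alpha>), cos (ph0 + \<beta>))\<bar>" using qabs abs_ge_self by metis
  also have "\<dots> \<le> supnorm X p" by (rule supnorm_finite_upper[OF fin ab(1)])
  finally have A: "M * cos (real n * max \<bar>\<alpha>\<bar> \<bar>\<beta>\<bar>) \<le> supnorm X p" .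
  have "cos (pi / \<mu>) \<le> cos (real n * max \<bar>\<alpha>\<bar> \<bar>\<beta>\<bar>)"
  proof (rule cos_monotone_0_pi_le)
    show "0 \<le> real n * max \<bar>\<alpha>\<bar> \<bar>\<beta>\<bar>" by simp
    show "real n * max \<bar>\<alpha>\<bar> \<bar>\<beta>\<bar> \<le> pi / \<mu>" by (rule ab(2))
    show "pi / \<mu> \<le> pi" using pimu \<open>pi / 2 < pi\<close> by linarith
  qed
  then have "M * cos (pi / \<mu>) \<le> M * cos (real n * max \<bar>\<alpha>\<bar> \<bar>\<beta>\<bar>)"
    unfolding M_def by (intro mult_left_mono) auto
  with A have B: "M * cos (pi / \<mu>) \<le> supnorm X p" by linarith
  have cpos: "cos (pi / \<mu>) > 0" using pimu pimu0 by (intro cos_gt_zero_pi) auto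
  from B cpos have "M \<le> supnorm X p / cos (pi / \<mu>)" by (simp add: pos_le_divide_eq)
  then show ?thesis using sup by simp
qed

lemma angle_pick:
  assumes "0 \<le> th" "th \<le> pi" "K \<ge> 1"
  shows "\<exists>m1. m1 \<le> K - 1 \<and> real m1 \<le> th * real K / pi \<and> th * real K / pi \<le> real m1 + 1"
proof -
  define s where "s = th * real K / pi"
  have s0: "0 \<le> s" using assms by (simp add: s_def)
  have sK: "s \<le> real K" using assms by (simp add: s_def divide_le_eq mult.commute mult_left_mono)
  show ?thesis
  proof (cases "s < real K")
    case True
    have f0: "0 \<le> \<lfloor>s\<rfloor>" using s0 by simp
    have "\<lfloor>s\<rfloor> < int K" using True by linarith
    then have "nat \<lfloor>s\<rfloor> \<le> K - 1" by linarith
    moreover have fe: "real (nat \<lfloor>s\<rfloor>) = of_int \<lfloor>s\<rfloor>" using f0 by simp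
    moreover have "real (nat \<lfloor>s\<rfloor>) \<le> s" using fe by linarith
    moreover have "s \<le> real (nat \<lfloor>s\<rfloor>) + 1" using fe by linarith
    ultimately show ?thesis unfolding s_def by blast
  next
    case False
    then have "s = real K" using sK by simp
    then show ?thesis using assms(3) unfolding s_def[symmetric]
      by (intro exI[of _ "K - 1"]) (auto simp: of_nat_diff)
  qed
qed

lemma cover_from_idx:
  assumes X: "(cos (real m * pi / real K), cos (real j * pi / real L)) \<in> X"
    and dm: "\<bar>real m - th * real K / pi\<bar> \<le> d" and dj: "\<bar>real j - ph * real L / pi\<bar> \<le> d"
    and KL: "K \<le> L" "0 < K" and nd: "real n * d * \<mu> \<le> real K" and mu: "\<mu> > 0"
  shows "\<exists>\<alpha> \<beta>. (cos (th + \<alpha>), cos (ph + \<beta>)) \<in> X \<and> real n * max \<bar>\<alpha>\<bar> \<bar>\<beta>\<bar> \<le> pi / \<mu>"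
proof (intro exI conjI)
  define \<alpha> where "\<alpha> = real m * pi / real K - th"
  define \<beta> where "\<beta> = real j * pi / real L - ph"
  have L0: "0 < L" using KL by simp
  show "(cos (th + \<alpha>), cos (ph + \<beta>)) \<in> X" using X by (simp add: \<alpha>_def \<beta>_def)
  have d0: "0 \<le> d" using dm by linarith
  have ea: "\<alpha> = (real m - th * real K / pi) * (pi / real K)" using KL by (simp add: \<alpha>_def field_simps)
  have eb: "\<beta> = (real j - ph * real L / pi) * (pi / real L)" using L0 by (simp add: \<beta>_def field_simps)
  have pK: "0 < pi / real K" "0 < pi / real L" using KL L0 by auto
  have "\<bar>\<alpha>\<bar> \<le> d * (pi / real K)" unfolding ea abs_mult abs_of_pos[OF pK(1)]
    using dm by (intro mult_right_mono) auto
  moreover have "\<bar>\<beta>\<bar> \<le> d * (pi / real K)"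
  proof -
    have "\<bar>\<beta>\<bar> \<le> d * (pi / real L)" unfolding eb abs_mult abs_of_pos[OF pK(2)]
      using dj by (intro mult_right_mono) auto
    also have "pi / real L \<le> pi / real K" using KL by (intro divide_left_mono) auto
    then have "d * (pi / real L) \<le> d * (pi / real K)" using d0 by (intro mult_left_mono)
    finally show ?thesis .
  qed
  ultimately have "max \<bar>\<alpha>\<bar> \<bar>\<beta>\<bar> \<le> d * (pi / real K)" by simp
  then have "real n * max \<bar>\<alpha>\<bar> \<bar>\<beta>\<bar> \<le> real n * (d * (pi / real K))" by (intro mult_left_mono) auto
  also have "\<dots> = (real n * d * \<mu>) * pi / (real K * \<mu>)" using mu KL by (simp add: field_simps)
  also have "\<dots> \<le> real K * pi / (real K * \<mu>)"
    using nd mu KL by (intro divide_right_mono mult_right_mono) auto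
  also have "\<dots> = pi / \<mu>" using KL by simp
  finally show "real n * max \<bar>\<alpha>\<bar> \<bar>\<beta>\<bar> \<le> pi / \<mu>" .
qed

lemma MP_mem: "1 \<le> m \<Longrightarrow> m \<le> \<nu>+1 \<Longrightarrow> 1 \<le> j \<Longrightarrow> j \<le> \<nu>+2 \<Longrightarrow> odd (m+j) \<Longrightarrow>
  (cos (real m * pi / real (\<nu> + 2)), cos (real j * pi / real (\<nu> + 3))) \<in> MP \<nu>"
  unfolding MP_def by blast

lemma MP_finite: "finite (MP \<nu>)"
proof -
  have "MP \<nu> \<subseteq> (\<lambda>(m,j). (cos (real m * pi / real (\<nu> + 2)), cos (real j * pi / real (\<nu> + 3)))) ` ({..\<nu>+1} \<times> {..\<nu>+2})"
    unfolding MP_def by auto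
  then show ?thesis by (rule finite_subset) auto
qed

lemma setA_finite: "finite (setA \<nu>)" unfolding setA_def using MP_finite by auto
lemma setB_finite: "finite (setB \<nu>)" unfolding setB_def using MP_finite by auto
lemma MP_sub_A: "MP \<nu> \<subseteq> setA \<nu>" unfolding setA_def by auto
lemma MP_sub_B: "MP \<nu> \<subseteq> setB \<nu>" unfolding setB_def by auto
lemma MP_ne: "MP \<nu> \<noteq> {}" using MP_mem[of 1 \<nu> 2] by auto

lemma grid_aux:
  assumes "0 \<le> th" "th \<le> pi" "0 \<le> ph" "ph \<le> pi"
  obtains m1 j1 where "m1 \<le> \<nu>+1" "real m1 \<le> th * real (\<nu>+2) / pi" "th * real (\<nu>+2) / pi \<le> real m1 + 1"
    "j1 \<le> \<nu>+2" "real j1 \<le> ph * real (\<nu>+3) / pi" "ph * real (\<nu>+3) / pi \<le> real j1 + 1"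
proof -
  obtain m1 where m1: "m1 \<le> (\<nu>+2) - 1" "real m1 \<le> th * real (\<nu>+2) / pi" "th * real (\<nu>+2) / pi \<le> real m1 + 1"
    using angle_pick[OF assms(1,2), of "\<nu>+2"] by auto
  obtain j1 where j1: "j1 \<le> (\<nu>+3) - 1" "real j1 \<le> ph * real (\<nu>+3) / pi" "ph * real (\<nu>+3) / pi \<le> real j1 + 1"
    using angle_pick[OF assms(3,4), of "\<nu>+3"] by auto
  show ?thesis using m1 j1 by (intro that[of m1 j1]) auto
qed

lemma cover_A:
  assumes mu: "\<mu> > 0" and nu: "real n * \<mu> \<le> real \<nu>"
    and r: "0 \<le> th" "th \<le> pi" "0 \<le> ph" "ph \<le> pi"
  shows "\<exists>\<alpha> \<beta>. (cos (th + \<alpha>), cos (ph + \<beta>)) \<in> setA \<nu> \<and> real n * max \<bar>\<alpha>\<bar> \<bar>\<beta>\<bar> \<le> pi / \<mu>"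
proof -
  obtain m1 j1 where g: "m1 \<le> \<nu>+1" "real m1 \<le> th * real (\<nu>+2) / pi" "th * real (\<nu>+2) / pi \<le> real m1 + 1"
    "j1 \<le> \<nu>+2" "real j1 \<le> ph * real (\<nu>+3) / pi" "ph * real (\<nu>+3) / pi \<le> real j1 + 1"
    using grid_aux[OF r] by blast
  obtain m j where mj: "m = m1 \<or> m = m1+1" "j = j1 \<or> j = j1+1"
    and c: "(1 \<le> m \<and> m \<le> \<nu>+1 \<and> 1 \<le> j \<and> j \<le> \<nu>+2 \<and> odd (m+j)) \<or> (m = 0 \<and> j = 0) \<or>
   (even \<nu> \<and> m = \<nu>+2 \<and> j = 0) \<or> (odd \<nu> \<and> m = 0 \<and> j = \<nu>+3)"
    using idx_A[OF g(1,4)] by blast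
  have dm: "\<bar>real m - th * real (\<nu>+2) / pi\<bar> \<le> 1" using mj(1) g(2,3) by auto
  have dj: "\<bar>real j - ph * real (\<nu>+3) / pi\<bar> \<le> 1" using mj(2) g(5,6) by auto
  have e: "real (\<nu>+2) * pi / real (\<nu>+2) = pi" "real (\<nu>+3) * pi / real (\<nu>+3) = pi"
    by (simp_all del: of_nat_add)
  have mem: "(cos (real m * pi / real (\<nu>+2)), cos (real j * pi / real (\<nu>+3))) \<in> setA \<nu>"
    using c
  proof (elim disjE conjE)
    assume "1 \<le> m" "m \<le> \<nu>+1" "1 \<le> j" "j \<le> \<nu>+2" "odd (m+j)"
    then show ?thesis using MP_mem MP_sub_A by blast
  next
    assume "m = 0" "j = 0" then show ?thesis by (simp add: setA_def)
  next
    assume "even \<nu>" "m = \<nu>+2" "j = 0" then show ?thesis using e by (simp add: setA_def del: of_nat_add)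
  next
    assume "odd \<nu>" "m = 0" "j = \<nu>+3" then show ?thesis using e by (simp add: setA_def del: of_nat_add)
  qed
  show ?thesis
    by (rule cover_from_idx[OF mem dm dj]) (use mu nu in auto)
qed

lemma cover_B:
  assumes mu: "\<mu> > 0" and nu: "real n * \<mu> \<le> real \<nu>"
    and r: "0 \<le> th" "th \<le> pi" "0 \<le> ph" "ph \<le> pi"
  shows "\<exists>\<alpha> \<beta>. (cos (th + \<alpha>), cos (ph + \<beta>)) \<in> setB \<nu> \<and> real n * max \<bar>\<alpha>\<bar> \<bar>\<beta>\<bar> \<le> pi / \<mu>"
proof -
  obtain m1 j1 where g: "m1 \<le> \<nu>+1" "real m1 \<le> th * real (\<nu>+2) / pi" "th * real (\<nu>+2) / pi \<le> real m1 + 1"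
    "j1 \<le> \<nu>+2" "real j1 \<le> ph * real (\<nu>+3) / pi" "ph * real (\<nu>+3) / pi \<le> real j1 + 1"
    using grid_aux[OF r] by blast
  obtain m j where mj: "m = m1 \<or> m = m1+1" "j = j1 \<or> j = j1+1"
    and c: "(1 \<le> m \<and> m \<le> \<nu>+1 \<and> 1 \<le> j \<and> j \<le> \<nu>+2 \<and> odd (m+j)) \<or> (m = 1 \<and> j = 1) \<or>
   (even \<nu> \<and> m = \<nu>+1 \<and> j = 1) \<or> (odd \<nu> \<and> m = 1 \<and> j = \<nu>+2)"
    using idx_B[OF g(1,4)] by blast
  have dm: "\<bar>real m - th * real (\<nu>+2) / pi\<bar> \<le> 1" using mj(1) g(2,3) by auto
  have dj: "\<bar>real j - ph * real (\<nu>+3) / pi\<bar> \<le> 1" using mj(2) g(5,6) by auto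
  have mem: "(cos (real m * pi / real (\<nu>+2)), cos (real j * pi / real (\<nu>+3))) \<in> setB \<nu>"
    using c
  proof (elim disjE conjE)
    assume "1 \<le> m" "m \<le> \<nu>+1" "1 \<le> j" "j \<le> \<nu>+2" "odd (m+j)"
    then show ?thesis using MP_mem MP_sub_B by blast
  next
    assume "m = 1" "j = 1" then show ?thesis by (simp add: setB_def del: of_nat_add)
  next
    assume "even \<nu>" "m = \<nu>+1" "j = 1" then show ?thesis by (simp add: setB_def del: of_nat_add)
  next
    assume "odd \<nu>" "m = 1" "j = \<nu>+2" then show ?thesis by (simp add: setB_def del: of_nat_add)
  qed
  show ?thesis
    by (rule cover_from_idx[OF mem dm dj]) (use mu nu in auto)
qed

lemma cover_MP:
  assumes mu: "\<mu> > 0" and nu: "real n * 2 * \<mu> \<le> real \<nu>"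
    and r: "0 \<le> th" "th \<le> pi" "0 \<le> ph" "ph \<le> pi"
  shows "\<exists>\<alpha> \<beta>. (cos (th + \<alpha>), cos (ph + \<beta>)) \<in> MP \<nu> \<and> real n * max \<bar>\<alpha>\<bar> \<bar>\<beta>\<bar> \<le> pi / \<mu>"
proof -
  obtain m1 j1 where g: "m1 \<le> \<nu>+1" "real m1 \<le> th * real (\<nu>+2) / pi" "th * real (\<nu>+2) / pi \<le> real m1 + 1"
    "j1 \<le> \<nu>+2" "real j1 \<le> ph * real (\<nu>+3) / pi" "ph * real (\<nu>+3) / pi \<le> real j1 + 1"
    using grid_aux[OF r] by blast
  obtain m j where mj: "m1 \<le> m+1" "m \<le> m1+2" "j1 \<le> j+1" "j \<le> j1+2"
    and c: "1 \<le> m \<and> m \<le> \<nu>+1 \<and> 1 \<le> j \<and> j \<le> \<nu>+2 \<and> odd (m+j)"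
    using idx_MP[OF g(1,4)] by blast
  have "real m1 \<le> real m + 1" "real m \<le> real m1 + 2" using mj(1,2) by linarith+
  then have dm: "\<bar>real m - th * real (\<nu>+2) / pi\<bar> \<le> 2" using g(2,3) by (simp only: abs_le_iff) linarith
  have "real j1 \<le> real j + 1" "real j \<le> real j1 + 2" using mj(3,4) by linarith+
  then have dj: "\<bar>real j - ph * real (\<nu>+3) / pi\<bar> \<le> 2" using g(5,6) by (simp only: abs_le_iff) linarith
  have mem: "(cos (real m * pi / real (\<nu>+2)), cos (real j * pi / real (\<nu>+3))) \<in> MP \<nu>"
    using c MP_mem by blast
  show ?thesis
    by (rule cover_from_idx[OF mem dm dj]) (use mu nu in auto)
qed

lemma min3_le:
  fixes x C a b c :: real
  assumes "x \<le> C * a" "x \<le> C * b" "x \<le> C * c"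
  shows "x \<le> C * min (min a b) c"
  using assms by (cases "a \<le> b"; cases "min a b \<le> c") (auto simp: min_def)

lemma min3_mono:
  fixes C a b c a' b' c' :: real
  assumes "0 \<le> C" "a \<le> a'" "b \<le> b'" "c \<le> c'"
  shows "C * min (min a b) c \<le> C * min (min a' b') c'"
  using assms by (intro mult_left_mono) (auto simp: min_def)

lemma part1:
  fixes n :: nat and \<mu> :: real
  assumes "n > 0" and mu: "\<mu> > 2" and bp: "bipoly n p"
  shows "supnorm Qsq p \<le> (1 / cos (pi / \<mu>)) *
             min (min (supnorm (setA (nat \<lceil>\<mu> * real n\<rceil>)) p)
                      (supnorm (setB (nat \<lceil>\<mu> * real n\<rceil>)) p))
                 (supnorm (MP (nat \<lceil>2 * \<mu> * real n\<rceil>)) p)"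
proof -
  define \<nu> where "\<nu> = nat \<lceil>\<mu> * real n\<rceil>"
  define \<nu>2 where "\<nu>2 = nat \<lceil>2 * \<mu> * real n\<rceil>"
  have m0: "\<mu> > 0" using mu by simp
  have nu: "real n * \<mu> \<le> real \<nu>" unfolding \<nu>_def
    by (metis mult.commute real_nat_ceiling_ge)
  have nu2: "real n * 2 * \<mu> \<le> real \<nu>2" unfolding \<nu>2_def
    by (metis mult.commute mult.assoc real_nat_ceiling_ge)
  show ?thesis unfolding \<nu>_def[symmetric] \<nu>2_def[symmetric]
  proof (rule min3_le)
    show "supnorm Qsq p \<le> (1 / cos (pi / \<mu>)) * supnorm (setA \<nu>) p"
      by (rule mesh_bound[OF bp mu setA_finite]) (rule cover_A[OF m0 nu])
    show "supnorm Qsq p \<le> (1 / cos (pi / \<mu>)) * supnorm (setB \<nu>) p"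
      by (rule mesh_bound[OF bp mu setB_finite]) (rule cover_B[OF m0 nu])
    show "supnorm Qsq p \<le> (1 / cos (pi / \<mu>)) * supnorm (MP \<nu>2) p"
      by (rule mesh_bound[OF bp mu MP_finite]) (rule cover_MP[OF m0 nu2])
  qed
qed

lemma lagrange_bipoly:
  assumes "unisolvent n S" shows "bipoly n (lagrange n S s)"
proof -
  have "\<exists>!p. bipoly n p \<and> (\<forall>t\<in>S. p t = (if t = s then 1 else 0))"
    using assms unfolding unisolvent_def by (rule allE[of _ "\<lambda>t. if t = s then 1 else 0"]) simp
  from theI'[OF this] show ?thesis unfolding lagrange_def by blast
qed

lemma supnorm_le:
  assumes "finite X" "X \<noteq> {}" "\<And>z. z \<in> X \<Longrightarrow> \<bar>g z\<bar> \<le> \<bar>h z\<bar>"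
  shows "supnorm X g \<le> supnorm X h"
  unfolding supnorm_def
proof (rule cSUP_least[OF assms(2)])
  fix z assume z: "z \<in> X"
  have "\<bar>h z\<bar> \<le> (SUP t\<in>X. \<bar>h t\<bar>)" by (rule cSUP_upper[OF z]) (use assms(1) in auto)
  then show "\<bar>g z\<bar> \<le> (SUP t\<in>X. \<bar>h t\<bar>)" using assms(3)[OF z] by linarith
qed

theorem theorem6:
  fixes n :: nat and \<mu> :: real
  assumes "n > 0" and "\<mu> > 2"
  shows "(\<forall>p. bipoly n p \<longrightarrow>
           supnorm Qsq p \<le> (1 / cos (pi / \<mu>)) *
             min (min (supnorm (setA (nat \<lceil>\<mu> * real n\<rceil>)) p)
                      (supnorm (setB (nat \<lceil>\<mu> * real n\<rceil>)) p))
                 (supnorm (MP (nat \<lceil>2 * \<mu> * real n\<rceil>)) p))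
       \<and> (\<forall>S. S \<subseteq> Qsq \<and> card S = (n + 1) * (n + 2) div 2 \<and> unisolvent n S \<longrightarrow>
           supnorm Qsq (lebfun n S) \<le> (1 / cos (pi / \<mu>)) *
             min (min (supnorm (setA (nat \<lceil>\<mu> * real n\<rceil>)) (lebfun n S))
                      (supnorm (setB (nat \<lceil>\<mu> * real n\<rceil>)) (lebfun n S)))
                 (supnorm (MP (nat \<lceil>2 * \<mu> * real n\<rceil>)) (lebfun n S)))"
proof -
  have n0: "n > 0" and mu: "\<mu> > 2" using assms by auto
  let ?C = "1 / cos (pi / \<mu>)"
  have pimu: "pi / \<mu> < pi / 2" by (rule divide_strict_left_mono) (use mu in auto)
  have pm0: "0 < pi / \<mu>" using mu by simp
  have "- (pi / 2) < pi / \<mu>" using pm0 pi_gt_zero by linarith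
  then have "cos (pi / \<mu>) > 0" using pimu by (intro cos_gt_zero_pi)
  then have C0: "0 \<le> ?C" by simp
  show ?thesis
  proof (intro conjI allI impI)
    fix p assume "bipoly n p"
    then show "supnorm Qsq p \<le> ?C *
             min (min (supnorm (setA (nat \<lceil>\<mu> * real n\<rceil>)) p)
                      (supnorm (setB (nat \<lceil>\<mu> * real n\<rceil>)) p))
                 (supnorm (MP (nat \<lceil>2 * \<mu> * real n\<rceil>)) p)"
      by (rule part1[OF n0 mu])
  next
    fix S assume S: "S \<subseteq> Qsq \<and> card S = (n + 1) * (n + 2) div 2 \<and> unisolvent n S"
    have "card S > 0"
    proof -
      have "(n + 1) * (n + 2) \<ge> 2" by (simp add: add_mult_distrib)
      then have "(n + 1) * (n + 2) div 2 \<ge> 1" by simp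
      then show ?thesis using S by simp
    qed
    then have finS: "finite S" using card_ge_0_finite by blast
    have bl: "bipoly n (lagrange n S s)" for s using S lagrange_bipoly by blast
    define L where "L = lebfun n S"
    have Lnn: "\<bar>L z\<bar> = L z" for z unfolding L_def lebfun_def by (simp add: sum_nonneg)
    define px where "px x = (\<lambda>z. \<Sum>s\<in>S. sgn (lagrange n S s x) * lagrange n S s z)" for x
    have bpx: "bipoly n (px x)" for x
      unfolding px_def by (intro bipoly_sum finS bipoly_scale bl)
    have sg: "sgn a * a = \<bar>a\<bar>" for a :: real by (simp add: sgn_if)
    have pxx: "px x x = L x" for x unfolding px_def L_def lebfun_def using sg by simp
    have pxle: "\<bar>px x z\<bar> \<le> \<bar>L z\<bar>" for x z
    proof -
      have "\<bar>px x z\<bar> \<le> (\<Sum>s\<in>S. \<bar>sgn (lagrange n S s x) * lagrange n S s z\<bar>)"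
        unfolding px_def by (rule sum_abs)
      also have "\<dots> \<le> (\<Sum>s\<in>S. \<bar>lagrange n S s z\<bar>)"
        by (intro sum_mono) (auto simp: abs_mult abs_sgn_eq)
      also have "\<dots> = \<bar>L z\<bar>" using Lnn unfolding L_def lebfun_def by simp
      finally show ?thesis .
    qed
    have neA: "setA \<nu> \<noteq> {}" and neB: "setB \<nu> \<noteq> {}" for \<nu> using MP_ne MP_sub_A MP_sub_B by blast+
    have bound: "\<bar>L x\<bar> \<le> ?C *
             min (min (supnorm (setA (nat \<lceil>\<mu> * real n\<rceil>)) L)
                      (supnorm (setB (nat \<lceil>\<mu> * real n\<rceil>)) L))
                 (supnorm (MP (nat \<lceil>2 * \<mu> * real n\<rceil>)) L)" if x: "x \<in> Qsq" for x
    proof -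
      have "\<bar>L x\<bar> = \<bar>px x x\<bar>" using pxx by simp
      also have "\<dots> \<le> supnorm Qsq (px x)"
        unfolding supnorm_def by (rule cSUP_upper[OF x bipoly_bdd[OF bpx]])
      also have "\<dots> \<le> ?C *
             min (min (supnorm (setA (nat \<lceil>\<mu> * real n\<rceil>)) (px x))
                      (supnorm (setB (nat \<lceil>\<mu> * real n\<rceil>)) (px x)))
                 (supnorm (MP (nat \<lceil>2 * \<mu> * real n\<rceil>)) (px x))"
        by (rule part1[OF n0 mu bpx])
      also have "\<dots> \<le> ?C *
             min (min (supnorm (setA (nat \<lceil>\<mu> * real n\<rceil>)) L)
                      (supnorm (setB (nat \<lceil>\<mu> * real n\<rceil>)) L))
                 (supnorm (MP (nat \<lceil>2 * \<mu> * real n\<rceil>)) L)"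
        by (intro min3_mono C0 supnorm_le setA_finite setB_finite MP_finite neA neB MP_ne pxle)
      finally show ?thesis .
    qed
    show "supnorm Qsq (lebfun n S) \<le> ?C *
             min (min (supnorm (setA (nat \<lceil>\<mu> * real n\<rceil>)) (lebfun n S))
                      (supnorm (setB (nat \<lceil>\<mu> * real n\<rceil>)) (lebfun n S)))
                 (supnorm (MP (nat \<lceil>2 * \<mu> * real n\<rceil>)) (lebfun n S))"
      unfolding L_def[symmetric] supnorm_def[of Qsq]
      by (rule cSUP_least) (use Qsq_ne bound in auto)
  qed
qed

end
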